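(* Let $\lambda_1,\lambda_2,\sigma_1,\sigma_2\in\mathbb{C}^*$ and $\eta_1,\eta_2\in\mathbb{C}$. Then $\Omega(\lambda_1,\eta_1,\sigma_1,0)\otimes\Omega(\lambda_2,\eta_2,0,\sigma_2)$ is an irreducible $\mathcal{G}$-module if and only if $\lambda_1\neq\lambda_2$.
   Context: The planar Galilean conformal algebra $\mathcal{G}$ is the complex Lie algebra with basis $\{L_m,H_m,I_m,J_m\mid m\in\mathbb{Z}\}$ and brackets $[L_m,L_n]=(n-m)L_{m+n}$, $[L_m,H_n]=nH_{m+n}$, $[L_m,I_n]=(n-m)I_{m+n}$, $[L_m,J_n]=(n-m)J_{m+n}$, $[H_m,I_n]=I_{m+n}$, $[H_m,J_n]=-J_{m+n}$, and $[H_m,H_n]=[I_m,I_n]=[J_m,J_n]=[I_m,J_n]=0$ for all $m,n\in\mathbb{Z}$. For $\lambda,\sigma\in\mathbb{C}^*$, $\eta\in\mathbb{C}$, the module $\Omega(\lambda,\eta,\sigma,0)$ is $\mathbb{C}[X,Y]$ with $L_m f(X,Y)=\lambda^m(Y-mX+m\eta)f(X,Y-m)$, $H_m f(X,Y)=\lambda^m X f(X,Y-m)$, $I_m f(X,Y)=\lambda^m\sigma f(X-1,Y-m)$, $J_m f(X,Y)=0$. The module $\Omega(\lambda,\eta,0,\sigma)$ is $\mathbb{C}[S,T]$ with $L_m f(S,T)=\lambda^m(T+mS+m\eta)f(S,T-m)$, $H_m f(S,T)=\lambda^m S f(S,T-m)$, $I_m f(S,T)=0$, $J_m f(S,T)=\lambda^m\sigma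 f(S+1,T-m)$. The tensor product of $\mathcal{G}$-modules has action $x(v\otimes w)=xv\otimes w+v\otimes xw$. *)

theory Defs
  imports Complex_Main
begin

text \<open>Basis elements of the planar Galilean conformal algebra G.\<close>
datatype gca = L int | H int | I int | J int

type_synonym fun2 = "complex \<Rightarrow> complex \<Rightarrow> complex"
type_synonym fun4 = "complex \<Rightarrow> complex \<Rightarrow> complex \<Rightarrow> complex \<Rightarrow> complex"

text \<open>Polynomials in two variables, realised as polynomial functions C^2 -> C
  (C is infinite, so this is isomorphic to C[X,Y]).\<close>
definition poly2 :: "fun2 set" where
  "poly2 = {f. \<exists>c :: nat \<times> nat \<Rightarrow> complex. finite {k. c k \<noteq> 0} \<and>
      (\<forall>x y. f x y = (\<Sum>k\<in>{k. c k \<noteq> 0}. c k * x ^ fst k * y ^ snd k))}"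

text \<open>Polynomials in four variables X,Y,S,T (a model of C[X,Y] (x) C[S,T]).\<close>
definition poly4 :: "fun4 set" where
  "poly4 = {F. \<exists>c :: nat \<times> nat \<times> nat \<times> nat \<Rightarrow> complex. finite {k. c k \<noteq> 0} \<and>
      (\<forall>x y s t. F x y s t = (\<Sum>k\<in>{k. c k \<noteq> 0}.
          c k * x ^ fst k * y ^ fst (snd k) * s ^ fst (snd (snd k)) * t ^ snd (snd (snd k))))}"

text \<open>The module Omega(lambda, eta, sigma, 0) on C[X,Y].\<close>
fun omegaI :: "complex \<Rightarrow> complex \<Rightarrow> complex \<Rightarrow> gca \<Rightarrow> fun2 \<Rightarrow> fun2" where
  "omegaI lam eta sig (L m) f = (\<lambda>X Y. lam powi m * (Y - of_int m * X + of_int m * eta) * f X (Y - of_int m))"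
| "omegaI lam eta sig (H m) f = (\<lambda>X Y. lam powi m * X * f X (Y - of_int m))"
| "omegaI lam eta sig (I m) f = (\<lambda>X Y. lam powi m * sig * f (X - 1) (Y - of_int m))"
| "omegaI lam eta sig (J m) f = (\<lambda>X Y. 0)"

text \<open>The module Omega(lambda, eta, 0, sigma) on C[S,T].\<close>
fun omegaJ :: "complex \<Rightarrow> complex \<Rightarrow> complex \<Rightarrow> gca \<Rightarrow> fun2 \<Rightarrow> fun2" where
  "omegaJ lam eta sig (L m) f = (\<lambda>S T. lam powi m * (T + of_int m * S + of_int m * eta) * f S (T - of_int m))"
| "omegaJ lam eta sig (H m) f = (\<lambda>S T. lam powi m * S * f S (T - of_int m))"
| "omegaJ lam eta sig (I m) f = (\<lambda>S T. 0)"
| "omegaJ lam eta sig (J m) f = (\<lambda>S T. lam powi m * sig * f (S + 1) (T - of_int m))"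

text \<open>Tensor product action on C[X,Y] (x) C[S,T] = C[X,Y,S,T]:
  x(f (x) g) = xf (x) g + f (x) xg, i.e. the first module acts on the variables X,Y
  and the second on S,T.\<close>
definition tensor_act :: "(gca \<Rightarrow> fun2 \<Rightarrow> fun2) \<Rightarrow> (gca \<Rightarrow> fun2 \<Rightarrow> fun2) \<Rightarrow> gca \<Rightarrow> fun4 \<Rightarrow> fun4" where
  "tensor_act A B g F = (\<lambda>x y s t. A g (\<lambda>x' y'. F x' y' s t) x y + B g (\<lambda>s' t'. F x y s' t') s t)"

definition csubspace4 :: "fun4 set \<Rightarrow> bool" where
  "csubspace4 W \<longleftrightarrow> (\<lambda>x y s t. 0) \<in> W \<and>
     (\<forall>F\<in>W. \<forall>G\<in>W. (\<lambda>x y s t. F x y s t + G x y s t) \<in> W) \<and>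
     (\<forall>c. \<forall>F\<in>W. (\<lambda>x y s t. c * F x y s t) \<in> W)"

text \<open>A module V (with action of the basis elements, hence of all of G by linearity)
  is irreducible: nonzero and the only G-submodules are 0 and V.\<close>
definition irreducible_mod4 :: "fun4 set \<Rightarrow> (gca \<Rightarrow> fun4 \<Rightarrow> fun4) \<Rightarrow> bool" where
  "irreducible_mod4 V act \<longleftrightarrow> V \<noteq> {\<lambda>x y s t. 0} \<and>
     (\<forall>W. W \<subseteq> V \<and> csubspace4 W \<and> (\<forall>g. \<forall>F\<in>W. act g F \<in> W) \<longrightarrow>
          W = {\<lambda>x y s t. 0} \<or> W = V)"

end

theory Submission
  imports Defs "HOL-Computational_Algebra.Polynomial"
begin

definition mono4 :: "nat \<times> nat \<times> nat \<times> nat \<Rightarrow> fun4" where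
  "mono4 k x y s t = x ^ fst k * y ^ fst (snd k) * s ^ fst (snd (snd k)) * t ^ snd (snd (snd k))"

lemma mono4_add: "mono4 (a1,a2,a3,a4) x y s t * mono4 (b1,b2,b3,b4) x y s t
   = mono4 (a1+b1,a2+b2,a3+b3,a4+b4) x y s t"
  by (simp add: mono4_def power_add mult_ac)

lemma poly4_gen:
  assumes "finite Ix"
  shows "(\<lambda>x y s t. \<Sum>i\<in>Ix. a i * mono4 (g i) x y s t) \<in> poly4"
proof -
  define c where "c k = (\<Sum>i\<in>{i\<in>Ix. g i = k}. a i)" for k
  have supp: "{k. c k \<noteq> 0} \<subseteq> g ` Ix"
  proof
    fix k assume k: "k \<in> {k. c k \<noteq> 0}"
    show "k \<in> g ` Ix"
    proof (rule ccontr)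
      assume "k \<notin> g ` Ix"
      then have "{i\<in>Ix. g i = k} = {}" by blast
      then have "c k = 0" unfolding c_def by (simp only: sum.empty)
      then show False using k by simp
    qed
  qed
  have fin: "finite {k. c k \<noteq> 0}" using supp assms finite_subset by blast
  have eq: "(\<Sum>k\<in>{k. c k \<noteq> 0}. c k * mono4 k x y s t) = (\<Sum>i\<in>Ix. a i * mono4 (g i) x y s t)" for x y s t
  proof -
    have "(\<Sum>k\<in>{k. c k \<noteq> 0}. c k * mono4 k x y s t) = (\<Sum>k\<in>g ` Ix. c k * mono4 k x y s t)"
      by (rule sum.mono_neutral_left) (use supp assms in auto)
    also have "\<dots> = (\<Sum>k\<in>g ` Ix. \<Sum>i\<in>{i\<in>Ix. g i = k}. a i * mono4 (g i) x y s t)"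
      unfolding c_def sum_distrib_right by (intro sum.cong refl) auto
    also have "\<dots> = (\<Sum>i\<in>Ix. a i * mono4 (g i) x y s t)"
      by (rule sum.image_gen[symmetric]) (rule assms)
    finally show ?thesis .
  qed
  have eq': "\<forall>x y s t. (\<Sum>i\<in>Ix. a i * mono4 (g i) x y s t) = (\<Sum>k\<in>{k. c k \<noteq> 0}.
          c k * x ^ fst k * y ^ fst (snd k) * s ^ fst (snd (snd k)) * t ^ snd (snd (snd k)))"
  proof -
    have m: "c k * mono4 k x y s t = c k * x ^ fst k * y ^ fst (snd k) * s ^ fst (snd (snd k)) * t ^ snd (snd (snd k))" for k x y s t
      unfolding mono4_def by (simp only: mult.assoc)
    show ?thesis unfolding m[symmetric] eq by simp
  qed
  show ?thesis unfolding poly4_def mem_Collect_eq using fin eq' by blast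
qed

lemma poly4_E:
  assumes "F \<in> poly4"
  obtains A c where "finite A" "\<And>x y s t. F x y s t = (\<Sum>k\<in>A. c k * mono4 k x y s t)"
proof -
  from assms obtain c where fin: "finite {k. c k \<noteq> 0}" and eq: "\<forall>x y s t. F x y s t = (\<Sum>k\<in>{k. c k \<noteq> 0}.
          c k * x ^ fst k * y ^ fst (snd k) * s ^ fst (snd (snd k)) * t ^ snd (snd (snd k)))"
    unfolding poly4_def by blast
  show thesis
    by (rule that[OF fin]) (simp add: eq mono4_def mult.assoc)
qed

lemma poly4_const: "(\<lambda>x y s t. c) \<in> poly4"
  using poly4_gen[of "{()}" "\<lambda>_. c" "\<lambda>_. (0,0,0,0)"] by (simp add: mono4_def)

lemma poly4_x: "(\<lambda>x y s t. x) \<in> poly4"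
  using poly4_gen[of "{()}" "\<lambda>_. 1" "\<lambda>_. (1,0,0,0)"] by (simp add: mono4_def)
lemma poly4_y: "(\<lambda>x y s t. y) \<in> poly4"
  using poly4_gen[of "{()}" "\<lambda>_. 1" "\<lambda>_. (0,1,0,0)"] by (simp add: mono4_def)
lemma poly4_s: "(\<lambda>x y s t. s) \<in> poly4"
  using poly4_gen[of "{()}" "\<lambda>_. 1" "\<lambda>_. (0,0,1,0)"] by (simp add: mono4_def)
lemma poly4_t: "(\<lambda>x y s t. t) \<in> poly4"
  using poly4_gen[of "{()}" "\<lambda>_. 1" "\<lambda>_. (0,0,0,1)"] by (simp add: mono4_def)

lemma poly4_add:
  assumes "F \<in> poly4" "G \<in> poly4"
  shows "(\<lambda>x y s t. F x y s t + G x y s t) \<in> poly4"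
proof -
  obtain A c where A: "finite A" "\<And>x y s t. F x y s t = (\<Sum>k\<in>A. c k * mono4 k x y s t)"
    using poly4_E[OF assms(1)] by blast
  obtain B d where B: "finite B" "\<And>x y s t. G x y s t = (\<Sum>k\<in>B. d k * mono4 k x y s t)"
    using poly4_E[OF assms(2)] by blast
  have "(\<lambda>x y s t. \<Sum>i\<in>A <+> B. case_sum c d i * mono4 (case_sum id id i) x y s t) \<in> poly4"
    using A B by (intro poly4_gen) auto
  moreover have "(\<lambda>x y s t. \<Sum>i\<in>A <+> B. case_sum c d i * mono4 (case_sum id id i) x y s t)
     = (\<lambda>x y s t. F x y s t + G x y s t)"
    using A B by (auto simp: fun_eq_iff sum.Plus)
  ultimately show ?thesis by simp
qed

lemma poly4_mult:
  assumes "F \<in> poly4" "G \<in> poly4"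
  shows "(\<lambda>x y s t. F x y s t * G x y s t) \<in> poly4"
proof -
  obtain A c where A: "finite A" "\<And>x y s t. F x y s t = (\<Sum>k\<in>A. c k * mono4 k x y s t)"
    using poly4_E[OF assms(1)] by blast
  obtain B d where B: "finite B" "\<And>x y s t. G x y s t = (\<Sum>k\<in>B. d k * mono4 k x y s t)"
    using poly4_E[OF assms(2)] by blast
  let ?g = "\<lambda>(k::nat\<times>nat\<times>nat\<times>nat, l::nat\<times>nat\<times>nat\<times>nat).
     (fst k + fst l, fst (snd k) + fst (snd l), fst (snd (snd k)) + fst (snd (snd l)),
      snd (snd (snd k)) + snd (snd (snd l)))"
  have "(\<lambda>x y s t. \<Sum>i\<in>A \<times> B. (c (fst i) * d (snd i)) * mono4 (?g i) x y s t) \<in> poly4"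
    using A(1) B(1) by (intro poly4_gen) simp
  moreover have "(\<lambda>x y s t. \<Sum>i\<in>A \<times> B. (c (fst i) * d (snd i)) * mono4 (?g i) x y s t)
     = (\<lambda>x y s t. F x y s t * G x y s t)"
  proof (intro ext)
    fix x y s t
    have "F x y s t * G x y s t = (\<Sum>k\<in>A. \<Sum>l\<in>B. (c k * mono4 k x y s t) * (d l * mono4 l x y s t))"
      by (simp add: A B sum_product)
    also have "\<dots> = (\<Sum>i\<in>A \<times> B. (c (fst i) * d (snd i)) * mono4 (?g i) x y s t)"
      unfolding sum.cartesian_product
    proof (intro sum.cong refl)
      fix i assume "i \<in> A \<times> B"
      obtain k l where i: "i = (k, l)" by (cases i)
      have "(c k * mono4 k x y s t) * (d l * mono4 l x y s t) = (c k * d l) * (mono4 k x y s t * mono4 l x y s t)"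
        by (simp only: mult_ac)
      also have "mono4 k x y s t * mono4 l x y s t = mono4 (?g (k,l)) x y s t"
      proof -
        obtain a1 a2 a3 a4 where k: "k = (a1,a2,a3,a4)" by (cases k) auto
        obtain b1 b2 b3 b4 where l: "l = (b1,b2,b3,b4)" by (cases l) auto
        show ?thesis using mono4_add[of a1 a2 a3 a4 x y s t b1 b2 b3 b4] unfolding k l by simp
      qed
      finally show "(case i of (k, l) \<Rightarrow> (c k * mono4 k x y s t) * (d l * mono4 l x y s t)) = (c (fst i) * d (snd i)) * mono4 (?g i) x y s t"
        using i by simp
    qed
    finally show "(\<Sum>i\<in>A \<times> B. (c (fst i) * d (snd i)) * mono4 (?g i) x y s t) = F x y s t * G x y s t" by (rule sym)
  qed
  ultimately show ?thesis by metis
qed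

inductive P4 :: "fun4 \<Rightarrow> bool" where
  Pc: "P4 (\<lambda>x y s t. c)"
| Px: "P4 (\<lambda>x y s t. x)"
| Py: "P4 (\<lambda>x y s t. y)"
| Ps: "P4 (\<lambda>x y s t. s)"
| Pt: "P4 (\<lambda>x y s t. t)"
| Padd: "P4 F \<Longrightarrow> P4 G \<Longrightarrow> P4 (\<lambda>x y s t. F x y s t + G x y s t)"
| Pmul: "P4 F \<Longrightarrow> P4 G \<Longrightarrow> P4 (\<lambda>x y s t. F x y s t * G x y s t)"

lemma P4_poly4: "P4 F \<Longrightarrow> F \<in> poly4"
  by (induction rule: P4.induct)
     (auto intro: poly4_const poly4_x poly4_y poly4_s poly4_t poly4_add poly4_mult)

lemma P4_sum: "finite A \<Longrightarrow> (\<And>k. k \<in> A \<Longrightarrow> P4 (f k)) \<Longrightarrow> P4 (\<lambda>x y s t. \<Sum>k\<in>A. f k x y s t)"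
proof (induction A rule: finite_induct)
  case empty then show ?case using Pc[of 0] by simp
next
  case (insert a A)
  then show ?case using Padd[of "f a" "\<lambda>x y s t. \<Sum>k\<in>A. f k x y s t"] by simp
qed

lemma P4_pow: "P4 F \<Longrightarrow> P4 (\<lambda>x y s t. F x y s t ^ n)"
proof (induction n)
  case 0 then show ?case using Pc[of 1] by simp
next
  case (Suc n) then show ?case using Pmul[of F "\<lambda>x y s t. F x y s t ^ n"] by simp
qed

lemma P4_mono4: "P4 (\<lambda>x y s t. c * mono4 k x y s t)"
  unfolding mono4_def
  by (intro Pmul Pc P4_pow[OF Px] P4_pow[OF Py] P4_pow[OF Ps] P4_pow[OF Pt])

lemma poly4_P4: "F \<in> poly4 \<Longrightarrow> P4 F"
proof -
  assume "F \<in> poly4"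
  then obtain A c where A: "finite A" "\<And>x y s t. F x y s t = (\<Sum>k\<in>A. c k * mono4 k x y s t)"
    using poly4_E by blast
  have "P4 (\<lambda>x y s t. \<Sum>k\<in>A. c k * mono4 k x y s t)"
    by (rule P4_sum[OF A(1)]) (rule P4_mono4)
  moreover have "F = (\<lambda>x y s t. \<Sum>k\<in>A. c k * mono4 k x y s t)" using A(2) by (intro ext) simp
  ultimately show ?thesis by simp
qed

lemma poly4_iff: "F \<in> poly4 \<longleftrightarrow> P4 F"
  using poly4_P4 P4_poly4 by blast

lemma P4_shift: "P4 F \<Longrightarrow> P4 (\<lambda>x y s t. F (x+a) (y+b) (s+c) (t+d))"
proof (induction rule: P4.induct)
  case (Pc c) then show ?case by (rule P4.Pc)
next
  case Px then show ?case using P4.Padd[OF P4.Px P4.Pc] by simp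
next
  case Py then show ?case using P4.Padd[OF P4.Py P4.Pc] by simp
next
  case Ps then show ?case using P4.Padd[OF P4.Ps P4.Pc] by simp
next
  case Pt then show ?case using P4.Padd[OF P4.Pt P4.Pc] by simp
next
  case (Padd F G) then show ?case using P4.Padd by blast
next
  case (Pmul F G) then show ?case using P4.Pmul by blast
qed

lemma P4_line: "P4 F \<Longrightarrow> \<exists>p. \<forall>z. F (a1+z*b1) (a2+z*b2) (a3+z*b3) (a4+z*b4) = poly p z"
proof (induction rule: P4.induct)
  case (Pc c) then show ?case by (intro exI[of _ "[:c:]"]) simp
next
  case Px then show ?case by (intro exI[of _ "[:a1,b1:]"]) (simp add: mult.commute)
next
  case Py then show ?case by (intro exI[of _ "[:a2,b2:]"]) (simp add: mult.commute)
next
  case Ps then show ?case by (intro exI[of _ "[:a3,b3:]"]) (simp add: mult.commute)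
next
  case Pt then show ?case by (intro exI[of _ "[:a4,b4:]"]) (simp add: mult.commute)
next
  case (Padd F G)
  then obtain p q where "\<forall>z. F (a1+z*b1) (a2+z*b2) (a3+z*b3) (a4+z*b4) = poly p z"
    "\<forall>z. G (a1+z*b1) (a2+z*b2) (a3+z*b3) (a4+z*b4) = poly q z" by blast
  then show ?case by (intro exI[of _ "p+q"]) simp
next
  case (Pmul F G)
  then obtain p q where "\<forall>z. F (a1+z*b1) (a2+z*b2) (a3+z*b3) (a4+z*b4) = poly p z"
    "\<forall>z. G (a1+z*b1) (a2+z*b2) (a3+z*b3) (a4+z*b4) = poly q z" by blast
  then show ?case by (intro exI[of _ "p*q"]) simp
qed

lemma poly_periodic:
  fixes p :: "complex poly"
  assumes per: "\<And>z. poly p (z+1) = poly p z"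
  shows "poly p w = poly p 0"
proof -
  have nat: "poly p (of_nat n) = poly p 0" for n
  proof (induction n)
    case (Suc n)
    have "poly p (of_nat (Suc n)) = poly p (of_nat n + 1)" by (simp add: add.commute)
    also have "\<dots> = poly p (of_nat n)" by (rule per)
    finally show ?case using Suc by simp
  qed simp
  let ?q = "p - [:poly p 0:]"
  have "range (of_nat :: nat \<Rightarrow> complex) \<subseteq> {z. poly ?q z = 0}"
    using nat by auto
  moreover have "infinite (range (of_nat :: nat \<Rightarrow> complex))"
    using inj_of_nat range_inj_infinite by blast
  ultimately have "infinite {z. poly ?q z = 0}" using finite_subset by blast
  then have "?q = 0" using poly_roots_finite by blast
  then have "poly ?q w = 0" by simp
  then show ?thesis by simp
qed

lemma per_x: assumes "P4 F" "\<And>x y s t. F (x+1) y s t = F x y s t" shows "F x y s t = F 0 y s t"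
proof -
  obtain p where p: "\<forall>z. F (0+z*1) (y+z*0) (s+z*0) (t+z*0) = poly p z"
    using P4_line[OF assms(1)] by blast
  then have p': "F z y s t = poly p z" for z by simp
  have "poly p (z+1) = poly p z" for z using assms(2) p' by metis
  then have "poly p x = poly p 0" by (rule poly_periodic)
  then show ?thesis using p' by simp
qed

lemma per_y: assumes "P4 F" "\<And>x y s t. F x (y+1) s t = F x y s t" shows "F x y s t = F x 0 s t"
proof -
  obtain p where p: "\<forall>z. F (x+z*0) (0+z*1) (s+z*0) (t+z*0) = poly p z"
    using P4_line[OF assms(1)] by blast
  then have p': "F x z s t = poly p z" for z by simp
  have "poly p (z+1) = poly p z" for z using assms(2) p' by metis
  then have "poly p y = poly p 0" by (rule poly_periodic)
  then show ?thesis using p' by simp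
qed

lemma per_s: assumes "P4 F" "\<And>x y s t. F x y (s+1) t = F x y s t" shows "F x y s t = F x y 0 t"
proof -
  obtain p where p: "\<forall>z. F (x+z*0) (y+z*0) (0+z*1) (t+z*0) = poly p z"
    using P4_line[OF assms(1)] by blast
  then have p': "F x y z t = poly p z" for z by simp
  have "poly p (z+1) = poly p z" for z using assms(2) p' by metis
  then have "poly p s = poly p 0" by (rule poly_periodic)
  then show ?thesis using p' by simp
qed

lemma per_t: assumes "P4 F" "\<And>x y s t. F x y s (t+1) = F x y s t" shows "F x y s t = F x y s 0"
proof -
  obtain p where p: "\<forall>z. F (x+z*0) (y+z*0) (s+z*0) (0+z*1) = poly p z"
    using P4_line[OF assms(1)] by blast
  then have p': "F x y s z = poly p z" for z by simp
  have "poly p (z+1) = poly p z" for z using assms(2) p' by metis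
  then have "poly p t = poly p 0" by (rule poly_periodic)
  then show ?thesis using p' by simp
qed

inductive Dg :: "nat \<Rightarrow> nat \<Rightarrow> fun4 \<Rightarrow> bool" for w where
  Dc: "Dg w n (\<lambda>x y s t. c)"
| Dx: "Dg w n F \<Longrightarrow> Dg w (n+w) (\<lambda>x y s t. x * F x y s t)"
| Ds: "Dg w n F \<Longrightarrow> Dg w (n+w) (\<lambda>x y s t. s * F x y s t)"
| Dy: "Dg w n F \<Longrightarrow> Dg w (Suc n) (\<lambda>x y s t. y * F x y s t)"
| Dt: "Dg w n F \<Longrightarrow> Dg w (Suc n) (\<lambda>x y s t. t * F x y s t)"
| Dadd: "Dg w n F \<Longrightarrow> Dg w n G \<Longrightarrow> Dg w n (\<lambda>x y s t. F x y s t + G x y s t)"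
| Dmono: "Dg w n F \<Longrightarrow> Dg w (Suc n) F"

lemma Dg_cong: "Dg w n F \<Longrightarrow> (\<And>x y s t. F x y s t = G x y s t) \<Longrightarrow> Dg w n G"
proof -
  assume "Dg w n F" "\<And>x y s t. F x y s t = G x y s t"
  moreover have "F = G" using \<open>\<And>x y s t. F x y s t = G x y s t\<close> by (intro ext) simp
  ultimately show ?thesis by simp
qed

lemma Dg_le: "Dg w n F \<Longrightarrow> n \<le> m \<Longrightarrow> Dg w m F"
proof (induction m)
  case 0 then show ?case by simp
next
  case (Suc m)
  show ?case
  proof (cases "n = Suc m")
    case True then show ?thesis using Suc by simp
  next
    case False then show ?thesis using Suc by (intro Dmono) simp
  qed
qed

lemma Dg_zero_fun: "Dg w n (\<lambda>x y s t. 0)" by (rule Dc)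

lemma Dg_scal: "Dg w n F \<Longrightarrow> Dg w n (\<lambda>x y s t. a * F x y s t)"
proof (induction rule: Dg.induct)
  case (Dc n c) then show ?case by (rule Dg.Dc)
next
  case (Dx n F) show ?case by (rule Dg_cong[OF Dg.Dx[OF Dx.IH]]) (simp add: mult_ac)
next
  case (Ds n F) show ?case by (rule Dg_cong[OF Dg.Ds[OF Ds.IH]]) (simp add: mult_ac)
next
  case (Dy n F) show ?case by (rule Dg_cong[OF Dg.Dy[OF Dy.IH]]) (simp add: mult_ac)
next
  case (Dt n F) show ?case by (rule Dg_cong[OF Dg.Dt[OF Dt.IH]]) (simp add: mult_ac)
next
  case (Dadd n F G) show ?case by (rule Dg_cong[OF Dg.Dadd[OF Dadd.IH]]) (simp add: distrib_left)
next
  case (Dmono n F) show ?case by (rule Dg.Dmono[OF Dmono.IH])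
qed

lemma Dg_lin: "Dg w n F \<Longrightarrow> Dg w n G \<Longrightarrow> Dg w n (\<lambda>x y s t. a * F x y s t + b * G x y s t)"
  by (intro Dadd Dg_scal)

lemma Dg_shift: "Dg w n F \<Longrightarrow> Dg w n (\<lambda>x y s t. F (x+a) (y+b) (s+c) (t+d))"
proof (induction rule: Dg.induct)
  case (Dc n c) then show ?case by (rule Dg.Dc)
next
  case (Dx n F)
  have "Dg w (n+w) (\<lambda>x y s t. 1 * (x * F (x+a) (y+b) (s+c) (t+d)) + a * F (x+a) (y+b) (s+c) (t+d))"
    by (intro Dg_lin Dg.Dx Dx.IH Dg_le[OF Dx.IH]) simp
  then show ?case by (rule Dg_cong) (simp add: algebra_simps)
next
  case (Ds n F)
  have "Dg w (n+w) (\<lambda>x y s t. 1 * (s * F (x+a) (y+b) (s+c) (t+d)) + c * F (x+a) (y+b) (s+c) (t+d))"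
    by (intro Dg_lin Dg.Ds Ds.IH Dg_le[OF Ds.IH]) simp
  then show ?case by (rule Dg_cong) (simp add: algebra_simps)
next
  case (Dy n F)
  have "Dg w (Suc n) (\<lambda>x y s t. 1 * (y * F (x+a) (y+b) (s+c) (t+d)) + b * F (x+a) (y+b) (s+c) (t+d))"
    by (intro Dg_lin Dg.Dy Dy.IH Dg_le[OF Dy.IH]) simp
  then show ?case by (rule Dg_cong) (simp add: algebra_simps)
next
  case (Dt n F)
  have "Dg w (Suc n) (\<lambda>x y s t. 1 * (t * F (x+a) (y+b) (s+c) (t+d)) + d * F (x+a) (y+b) (s+c) (t+d))"
    by (intro Dg_lin Dg.Dt Dt.IH Dg_le[OF Dt.IH]) simp
  then show ?case by (rule Dg_cong) (simp add: algebra_simps)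
next
  case (Dadd n F G) show ?case by (rule Dg.Dadd[OF Dadd.IH])
next
  case (Dmono n F) show ?case by (rule Dg.Dmono[OF Dmono.IH])
qed

lemma Dg_mul: "Dg w n F \<Longrightarrow> Dg w m G \<Longrightarrow> Dg w (n+m) (\<lambda>x y s t. F x y s t * G x y s t)"
proof (induction rule: Dg.induct)
  case (Dc n c) then show ?case by (intro Dg_le[OF Dg_scal]) auto
next
  case (Dx n F)
  then have "Dg w (n+m+w) (\<lambda>x y s t. x * (F x y s t * G x y s t))" by (intro Dg.Dx)
  then have "Dg w (n+m+w) (\<lambda>x y s t. x * F x y s t * G x y s t)" by (rule Dg_cong) (simp add: mult_ac)
  then show ?case by (simp add: ac_simps)
next
  case (Ds n F)
  then have "Dg w (n+m+w) (\<lambda>x y s t. s * (F x y s t * G x y s t))" by (intro Dg.Ds)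
  then have "Dg w (n+m+w) (\<lambda>x y s t. s * F x y s t * G x y s t)" by (rule Dg_cong) (simp add: mult_ac)
  then show ?case by (simp add: ac_simps)
next
  case (Dy n F)
  then have "Dg w (Suc (n+m)) (\<lambda>x y s t. y * (F x y s t * G x y s t))" by (intro Dg.Dy)
  then have "Dg w (Suc (n+m)) (\<lambda>x y s t. y * F x y s t * G x y s t)" by (rule Dg_cong) (simp add: mult_ac)
  then show ?case by simp
next
  case (Dt n F)
  then have "Dg w (Suc (n+m)) (\<lambda>x y s t. t * (F x y s t * G x y s t))" by (intro Dg.Dt)
  then have "Dg w (Suc (n+m)) (\<lambda>x y s t. t * F x y s t * G x y s t)" by (rule Dg_cong) (simp add: mult_ac)
  then show ?case by simp
next
  case (Dadd n F1 F2)
  then have "Dg w (n+m) (\<lambda>x y s t. F1 x y s t * G x y s t + F2 x y s t * G x y s t)" by (intro Dg.Dadd)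
  then show ?case by (rule Dg_cong) (simp add: distrib_right)
next
  case (Dmono n F)
  then show ?case using Dg.Dmono by fastforce
qed

lemma P4_Dg: "P4 F \<Longrightarrow> \<exists>n. Dg w n F"
proof (induction rule: P4.induct)
  case (Pc c) then show ?case using Dg.Dc by blast
next
  case Px then show ?case using Dg.Dx[OF Dg.Dc[of w 0 1]] by auto
next
  case Py then show ?case using Dg.Dy[OF Dg.Dc[of w 0 1]] by auto
next
  case Ps then show ?case using Dg.Ds[OF Dg.Dc[of w 0 1]] by auto
next
  case Pt then show ?case using Dg.Dt[OF Dg.Dc[of w 0 1]] by auto
next
  case (Padd F G)
  then obtain n m where "Dg w n F" "Dg w m G" by blast
  then have "Dg w (max n m) F" "Dg w (max n m) G" by (auto intro: Dg_le)
  then show ?case using Dg.Dadd by blast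
next
  case (Pmul F G)
  then obtain n m where "Dg w n F" "Dg w m G" by blast
  then show ?case using Dg_mul by blast
qed

lemma Dg_P4: "Dg w n F \<Longrightarrow> P4 F"
  by (induction rule: Dg.induct) (auto intro: P4.intros)

lemma Dg_zero: "Dg w n F \<Longrightarrow> n = 0 \<Longrightarrow> (w = 0 \<longrightarrow> a = 0 \<and> c = 0) \<Longrightarrow>
   F (x+a) (y+b) (s+c) (t+d) = F x y s t"
  by (induction rule: Dg.induct) auto

lemma Dg1_const: "Dg w n F \<Longrightarrow> n = 0 \<Longrightarrow> w = Suc 0 \<Longrightarrow> F x y s t = F 0 0 0 0"
  by (induction rule: Dg.induct) auto

lemma Dg_diff: "Dg w n F \<Longrightarrow> (w = 0 \<longrightarrow> a = 0 \<and> c = 0) \<Longrightarrow>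
  Dg w (n - 1) (\<lambda>x y s t. F (x+a) (y+b) (s+c) (t+d) - F x y s t)"
proof (induction rule: Dg.induct)
  case (Dc n c0) show ?case by (rule Dg_cong[OF Dg.Dc[of w _ 0]]) simp
next
  case (Dx n F)
  note IH = Dx.IH[OF Dx.prems]
  have key: "(x+a) * F (x+a) (y+b) (s+c) (t+d) - x * F x y s t =
      x * (F (x+a) (y+b) (s+c) (t+d) - F x y s t) + a * F (x+a) (y+b) (s+c) (t+d)" for x y s t
    by (simp add: algebra_simps)
  have sh: "Dg w n (\<lambda>x y s t. a * F (x+a) (y+b) (s+c) (t+d))"
    by (intro Dg_scal Dg_shift Dx.hyps)
  show ?case
  proof (cases "n = 0")
    case True
    then have z: "F (x+a) (y+b) (s+c) (t+d) - F x y s t = 0" for x y s t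
      using Dg_zero[OF Dx.hyps True] Dx.prems by simp
    show ?thesis
    proof (cases "w = 0")
      case True
      then have "a = 0" using Dx.prems by simp
      have "(x+a) * F (x+a) (y+b) (s+c) (t+d) - x * F x y s t = 0" for x y s t
        unfolding key z using \<open>a = 0\<close> by simp
      then show ?thesis by (intro Dg_cong[OF Dg.Dc[of w _ 0]]) simp
    next
      case False
      have "Dg w (n + w - 1) (\<lambda>x y s t. a * F (x+a) (y+b) (s+c) (t+d))"
        by (rule Dg_le[OF sh]) (use False in simp)
      then show ?thesis by (rule Dg_cong) (simp add: key z)
    qed
  next
    case False
    have d1: "Dg w (n - 1 + w) (\<lambda>x y s t. x * (F (x+a) (y+b) (s+c) (t+d) - F x y s t))"
      by (rule Dg.Dx[OF IH])
    show ?thesis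
    proof (cases "w = 0")
      case True
      then have "a = 0" using Dx.prems by simp
      have "Dg w (n + w - 1) (\<lambda>x y s t. x * (F (x+a) (y+b) (s+c) (t+d) - F x y s t))"
        using d1 True by simp
      then show ?thesis by (rule Dg_cong) (simp add: key \<open>a = 0\<close> right_diff_distrib)
    next
      case w: False
      have "Dg w (n + w - 1) (\<lambda>x y s t. 1 * (x * (F (x+a) (y+b) (s+c) (t+d) - F x y s t))
          + 1 * (a * F (x+a) (y+b) (s+c) (t+d)))"
        by (intro Dg_lin Dg_le[OF d1] Dg_le[OF sh]) (use False w in auto)
      then show ?thesis by (rule Dg_cong) (simp add: key)
    qed
  qed
next
  case (Ds n F)
  note IH = Ds.IH[OF Ds.prems]
  have key: "(s+c) * F (x+a) (y+b) (s+c) (t+d) - s * F x y s t =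
      s * (F (x+a) (y+b) (s+c) (t+d) - F x y s t) + c * F (x+a) (y+b) (s+c) (t+d)" for x y s t
    by (simp add: algebra_simps)
  have sh: "Dg w n (\<lambda>x y s t. c * F (x+a) (y+b) (s+c) (t+d))"
    by (intro Dg_scal Dg_shift Ds.hyps)
  show ?case
  proof (cases "n = 0")
    case True
    then have z: "F (x+a) (y+b) (s+c) (t+d) - F x y s t = 0" for x y s t
      using Dg_zero[OF Ds.hyps True] Ds.prems by simp
    show ?thesis
    proof (cases "w = 0")
      case True
      then have "c = 0" using Ds.prems by simp
      have "(s+c) * F (x+a) (y+b) (s+c) (t+d) - s * F x y s t = 0" for x y s t
        unfolding key z using \<open>c = 0\<close> by simp
      then show ?thesis by (intro Dg_cong[OF Dg.Dc[of w _ 0]]) simp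
    next
      case False
      have "Dg w (n + w - 1) (\<lambda>x y s t. c * F (x+a) (y+b) (s+c) (t+d))"
        by (rule Dg_le[OF sh]) (use False in simp)
      then show ?thesis by (rule Dg_cong) (simp add: key z)
    qed
  next
    case False
    have d1: "Dg w (n - 1 + w) (\<lambda>x y s t. s * (F (x+a) (y+b) (s+c) (t+d) - F x y s t))"
      by (rule Dg.Ds[OF IH])
    show ?thesis
    proof (cases "w = 0")
      case True
      then have "c = 0" using Ds.prems by simp
      have "Dg w (n + w - 1) (\<lambda>x y s t. s * (F (x+a) (y+b) (s+c) (t+d) - F x y s t))"
        using d1 True by simp
      then show ?thesis by (rule Dg_cong) (simp add: key \<open>c = 0\<close> right_diff_distrib)
    next
      case w: False
      have "Dg w (n + w - 1) (\<lambda>x y s t. 1 * (s * (F (x+a) (y+b) (s+c) (t+d) - F x y s t))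
          + 1 * (c * F (x+a) (y+b) (s+c) (t+d)))"
        by (intro Dg_lin Dg_le[OF d1] Dg_le[OF sh]) (use False w in auto)
      then show ?thesis by (rule Dg_cong) (simp add: key)
    qed
  qed
next
  case (Dy n F)
  note IH = Dy.IH[OF Dy.prems]
  have key: "(y+b) * F (x+a) (y+b) (s+c) (t+d) - y * F x y s t =
      y * (F (x+a) (y+b) (s+c) (t+d) - F x y s t) + b * F (x+a) (y+b) (s+c) (t+d)" for x y s t
    by (simp add: algebra_simps)
  have sh: "Dg w n (\<lambda>x y s t. b * F (x+a) (y+b) (s+c) (t+d))"
    by (intro Dg_scal Dg_shift Dy.hyps)
  show ?case
  proof (cases "n = 0")
    case True
    then have z: "F (x+a) (y+b) (s+c) (t+d) - F x y s t = 0" for x y s t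
      using Dg_zero[OF Dy.hyps True] Dy.prems by simp
    have "Dg w n (\<lambda>x y s t. (y+b) * F (x+a) (y+b) (s+c) (t+d) - y * F x y s t)"
      by (rule Dg_cong[OF sh]) (simp add: key z)
    then show ?thesis by simp
  next
    case False
    have d1: "Dg w (Suc (n - 1)) (\<lambda>x y s t. y * (F (x+a) (y+b) (s+c) (t+d) - F x y s t))"
      by (rule Dg.Dy[OF IH])
    have "Dg w n (\<lambda>x y s t. 1 * (y * (F (x+a) (y+b) (s+c) (t+d) - F x y s t))
          + 1 * (b * F (x+a) (y+b) (s+c) (t+d)))"
      by (intro Dg_lin Dg_le[OF d1] sh) (use False in auto)
    then have "Dg w n (\<lambda>x y s t. (y+b) * F (x+a) (y+b) (s+c) (t+d) - y * F x y s t)"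
      by (rule Dg_cong) (simp add: key)
    then show ?thesis by simp
  qed
next
  case (Dt n F)
  note IH = Dt.IH[OF Dt.prems]
  have key: "(t+d) * F (x+a) (y+b) (s+c) (t+d) - t * F x y s t =
      t * (F (x+a) (y+b) (s+c) (t+d) - F x y s t) + d * F (x+a) (y+b) (s+c) (t+d)" for x y s t
    by (simp add: algebra_simps)
  have sh: "Dg w n (\<lambda>x y s t. d * F (x+a) (y+b) (s+c) (t+d))"
    by (intro Dg_scal Dg_shift Dt.hyps)
  show ?case
  proof (cases "n = 0")
    case True
    then have z: "F (x+a) (y+b) (s+c) (t+d) - F x y s t = 0" for x y s t
      using Dg_zero[OF Dt.hyps True] Dt.prems by simp
    have "Dg w n (\<lambda>x y s t. (t+d) * F (x+a) (y+b) (s+c) (t+d) - t * F x y s t)"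
      by (rule Dg_cong[OF sh]) (simp add: key z)
    then show ?thesis by simp
  next
    case False
    have d1: "Dg w (Suc (n - 1)) (\<lambda>x y s t. t * (F (x+a) (y+b) (s+c) (t+d) - F x y s t))"
      by (rule Dg.Dt[OF IH])
    have "Dg w n (\<lambda>x y s t. 1 * (t * (F (x+a) (y+b) (s+c) (t+d) - F x y s t))
          + 1 * (d * F (x+a) (y+b) (s+c) (t+d)))"
      by (intro Dg_lin Dg_le[OF d1] sh) (use False in auto)
    then have "Dg w n (\<lambda>x y s t. (t+d) * F (x+a) (y+b) (s+c) (t+d) - t * F x y s t)"
      by (rule Dg_cong) (simp add: key)
    then show ?thesis by simp
  qed
next
  case (Dadd n F G)
  have "Dg w (n - 1) (\<lambda>x y s t. (F (x+a) (y+b) (s+c) (t+d) - F x y s t) + (G (x+a) (y+b) (s+c) (t+d) - G x y s t))"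
    by (intro Dg.Dadd Dadd.IH Dadd.prems)
  then show ?case by (rule Dg_cong) simp
next
  case (Dmono n F)
  show ?case by (rule Dg_le[OF Dmono.IH[OF Dmono.prems]]) simp
qed

lemma Dg_ydiff: "Dg w n F \<Longrightarrow> Dg w n (\<lambda>x y s t. y * (F x (y+b) s t - F x y s t))"
proof -
  assume F: "Dg w n F"
  have D: "Dg w (n - 1) (\<lambda>x y s t. F (x+0) (y+b) (s+0) (t+0) - F x y s t)"
    by (rule Dg_diff[OF F]) simp
  show ?thesis
  proof (cases "n = 0")
    case True
    have "F (x+0) (y+b) (s+0) (t+0) = F x y s t" for x y s t by (rule Dg_zero[OF F True]) simp
    then have z: "F x (y+b) s t = F x y s t" for x y s t by simp_all
    show ?thesis by (intro Dg_cong[OF Dg.Dc[of w _ 0]]) (simp add: z)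
  next
    case False
    have "Dg w (Suc (n-1)) (\<lambda>x y s t. y * (F (x+0) (y+b) (s+0) (t+0) - F x y s t))" by (rule Dg.Dy[OF D])
    then have "Dg w n (\<lambda>x y s t. y * (F (x+0) (y+b) (s+0) (t+0) - F x y s t))" using False by simp
    then show ?thesis by (rule Dg_cong) simp
  qed
qed

lemma Dg_tdiff: "Dg w n F \<Longrightarrow> Dg w n (\<lambda>x y s t. t * (F x y s (t+d) - F x y s t))"
proof -
  assume F: "Dg w n F"
  have D: "Dg w (n - 1) (\<lambda>x y s t. F (x+0) (y+0) (s+0) (t+d) - F x y s t)"
    by (rule Dg_diff[OF F]) simp
  show ?thesis
  proof (cases "n = 0")
    case True
    have "F (x+0) (y+0) (s+0) (t+d) = F x y s t" for x y s t by (rule Dg_zero[OF F True]) simp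
    then have z: "F x y s (t+d) = F x y s t" for x y s t by simp_all
    show ?thesis by (intro Dg_cong[OF Dg.Dc[of w _ 0]]) (simp add: z)
  next
    case False
    have "Dg w (Suc (n-1)) (\<lambda>x y s t. t * (F (x+0) (y+0) (s+0) (t+d) - F x y s t))" by (rule Dg.Dt[OF D])
    then have "Dg w n (\<lambda>x y s t. t * (F (x+0) (y+0) (s+0) (t+d) - F x y s t))" using False by simp
    then show ?thesis by (rule Dg_cong) simp
  qed
qed

lemma act_eval: "tensor_act (omegaI lam1 eta1 sig1) (omegaJ lam2 eta2 sig2) g F x y s t =
  (case g of
     L m \<Rightarrow> lam1 powi m * (y - of_int m * x + of_int m * eta1) * F x (y - of_int m) s t
            + lam2 powi m * (t + of_int m * s + of_int m * eta2) * F x y s (t - of_int m)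
   | H m \<Rightarrow> lam1 powi m * x * F x (y - of_int m) s t + lam2 powi m * s * F x y s (t - of_int m)
   | I m \<Rightarrow> lam1 powi m * sig1 * F (x - 1) (y - of_int m) s t
   | J m \<Rightarrow> lam2 powi m * sig2 * F x y (s + 1) (t - of_int m))"
  by (cases g) (simp_all add: tensor_act_def)

locale gm =
  fixes W :: "fun4 set" and lam1 lam2 eta1 eta2 sig1 sig2 :: complex
  assumes W0: "(\<lambda>x y s t. 0) \<in> W"
    and Wadd: "F \<in> W \<Longrightarrow> G \<in> W \<Longrightarrow> (\<lambda>x y s t. F x y s t + G x y s t) \<in> W"
    and Wsc: "F \<in> W \<Longrightarrow> (\<lambda>x y s t. c * F x y s t) \<in> W"
    and Wact: "F \<in> W \<Longrightarrow> tensor_act (omegaI lam1 eta1 sig1) (omegaJ lam2 eta2 sig2) g F \<in> W"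
    and l1: "lam1 \<noteq> 0" and l2: "lam2 \<noteq> 0" and s1: "sig1 \<noteq> 0" and s2: "sig2 \<noteq> 0"
    and neq: "lam1 \<noteq> lam2"
begin

lemma Wcong: "F \<in> W \<Longrightarrow> (\<And>x y s t. F x y s t = G x y s t) \<Longrightarrow> G \<in> W"
proof -
  assume "F \<in> W" "\<And>x y s t. F x y s t = G x y s t"
  moreover have "F = G" using \<open>\<And>x y s t. F x y s t = G x y s t\<close> by (intro ext) simp
  ultimately show ?thesis by simp
qed

lemma Wlin: "F \<in> W \<Longrightarrow> G \<in> W \<Longrightarrow> (\<lambda>x y s t. a * F x y s t + b * G x y s t) \<in> W"
  by (intro Wadd Wsc)

lemma Wact': "F \<in> W \<Longrightarrow> (\<lambda>x y s t. tensor_act (omegaI lam1 eta1 sig1) (omegaJ lam2 eta2 sig2) g F x y s t) \<in> W"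
  using Wact by simp

lemma WI0: "F \<in> W \<Longrightarrow> (\<lambda>x y s t. F (x - 1) y s t) \<in> W"
  by (rule Wcong[OF Wsc[OF Wact'[of F "I 0"]], of "1/sig1"]) (simp_all add: act_eval s1)

lemma WI1: "F \<in> W \<Longrightarrow> (\<lambda>x y s t. F (x - 1) (y - 1) s t) \<in> W"
  by (rule Wcong[OF Wsc[OF Wact'[of F "I 1"]], of "1/(lam1*sig1)"]) (simp_all add: act_eval s1 l1)

lemma WJ0: "F \<in> W \<Longrightarrow> (\<lambda>x y s t. F x y (s + 1) t) \<in> W"
  by (rule Wcong[OF Wsc[OF Wact'[of F "J 0"]], of "1/sig2"]) (simp_all add: act_eval s2)

lemma WJ1: "F \<in> W \<Longrightarrow> (\<lambda>x y s t. F x y (s + 1) (t - 1)) \<in> W"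
  by (rule Wcong[OF Wsc[OF Wact'[of F "J 1"]], of "1/(lam2*sig2)"]) (simp_all add: act_eval s2 l2)

lemma WH0: "F \<in> W \<Longrightarrow> (\<lambda>x y s t. x * F x y s t + s * F x y s t) \<in> W"
  by (rule Wcong[OF Wact'[of F "H 0"]]) (simp_all add: act_eval)

lemma WH1: "F \<in> W \<Longrightarrow> (\<lambda>x y s t. lam1 * x * F x (y - 1) s t + lam2 * s * F x y s (t - 1)) \<in> W"
  by (rule Wcong[OF Wact'[of F "H 1"]]) (simp_all add: act_eval)

lemma WL0: "F \<in> W \<Longrightarrow> (\<lambda>x y s t. y * F x y s t + t * F x y s t) \<in> W"
  by (rule Wcong[OF Wact'[of F "L 0"]]) (simp_all add: act_eval)

lemma WL1: "F \<in> W \<Longrightarrow> (\<lambda>x y s t. lam1 * (y - x + eta1) * F x (y - 1) s t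
    + lam2 * (t + s + eta2) * F x y s (t - 1)) \<in> W"
  by (rule Wcong[OF Wact'[of F "L 1"]]) (simp_all add: act_eval)

lemma XS:
  assumes F: "F \<in> W"
    and e1: "(\<lambda>x y s t. x * (F x (y - 1) s t - F x y s t)) \<in> W"
    and e2: "(\<lambda>x y s t. s * (F x y s (t - 1) - F x y s t)) \<in> W"
  shows "(\<lambda>x y s t. x * F x y s t) \<in> W" "(\<lambda>x y s t. s * F x y s t) \<in> W"
proof -
  have d: "lam1 - lam2 \<noteq> 0" using neq by simp
  have G1: "(\<lambda>x y s t. 1 * (lam1 * x * F x (y - 1) s t + lam2 * s * F x y s (t - 1))
      + (- lam2) * (x * F x y s t + s * F x y s t)) \<in> W"
    by (intro Wlin WH1 WH0 F)
  have G2: "(\<lambda>x y s t. 1 * (1 * (lam1 * x * F x (y - 1) s t + lam2 * s * F x y s (t - 1))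
      + (- lam2) * (x * F x y s t + s * F x y s t)) + (- lam1) * (x * (F x (y - 1) s t - F x y s t))) \<in> W"
    by (rule Wlin[OF G1 e1])
  have G3: "(\<lambda>x y s t. 1 * (1 * (1 * (lam1 * x * F x (y - 1) s t + lam2 * s * F x y s (t - 1))
      + (- lam2) * (x * F x y s t + s * F x y s t)) + (- lam1) * (x * (F x (y - 1) s t - F x y s t)))
      + (- lam2) * (s * (F x y s (t - 1) - F x y s t))) \<in> W"
    by (rule Wlin[OF G2 e2])
  have G4: "(\<lambda>x y s t. (lam1 - lam2) * (x * F x y s t)) \<in> W"
    by (rule Wcong[OF G3]) (simp add: algebra_simps)
  show X: "(\<lambda>x y s t. x * F x y s t) \<in> W"
    by (rule Wcong[OF Wsc[OF G4, of "1 / (lam1 - lam2)"]]) (simp add: d neq)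
  show "(\<lambda>x y s t. s * F x y s t) \<in> W"
    by (rule Wcong[OF Wlin[OF WH0[OF F] X, of 1 "-1"]]) simp
qed

lemma YT:
  assumes F: "F \<in> W"
    and e1: "(\<lambda>x y s t. y * (F x (y - 1) s t - F x y s t)) \<in> W"
    and e2: "(\<lambda>x y s t. t * (F x y s (t - 1) - F x y s t)) \<in> W"
    and e3: "(\<lambda>x y s t. (eta1 - x) * F x (y - 1) s t) \<in> W"
    and e4: "(\<lambda>x y s t. (s + eta2) * F x y s (t - 1)) \<in> W"
  shows "(\<lambda>x y s t. y * F x y s t) \<in> W" "(\<lambda>x y s t. t * F x y s t) \<in> W"
proof -
  have d: "lam1 - lam2 \<noteq> 0" using neq by simp
  let ?L1 = "\<lambda>x y s t. lam1 * (y - x + eta1) * F x (y - 1) s t + lam2 * (t + s + eta2) * F x y s (t - 1)"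
  let ?L0 = "\<lambda>x y s t. y * F x y s t + t * F x y s t"
  have G1: "(\<lambda>x y s t. 1 * ?L1 x y s t + (- lam1) * (y * (F x (y - 1) s t - F x y s t))) \<in> W"
    by (rule Wlin[OF WL1[OF F] e1])
  have G2: "(\<lambda>x y s t. 1 * (1 * ?L1 x y s t + (- lam1) * (y * (F x (y - 1) s t - F x y s t)))
     + (- lam2) * (t * (F x y s (t - 1) - F x y s t))) \<in> W"
    by (rule Wlin[OF G1 e2])
  have G3: "(\<lambda>x y s t. 1 * (1 * (1 * ?L1 x y s t + (- lam1) * (y * (F x (y - 1) s t - F x y s t)))
     + (- lam2) * (t * (F x y s (t - 1) - F x y s t))) + (- lam1) * ((eta1 - x) * F x (y - 1) s t)) \<in> W"
    by (rule Wlin[OF G2 e3])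
  have G4: "(\<lambda>x y s t. 1 * (1 * (1 * (1 * ?L1 x y s t + (- lam1) * (y * (F x (y - 1) s t - F x y s t)))
     + (- lam2) * (t * (F x y s (t - 1) - F x y s t))) + (- lam1) * ((eta1 - x) * F x (y - 1) s t))
     + (- lam2) * ((s + eta2) * F x y s (t - 1))) \<in> W"
    by (rule Wlin[OF G3 e4])
  have K: "(\<lambda>x y s t. lam1 * (y * F x y s t) + lam2 * (t * F x y s t)) \<in> W"
    by (rule Wcong[OF G4]) (simp add: algebra_simps)
  have Y: "(\<lambda>x y s t. 1 * (lam1 * (y * F x y s t) + lam2 * (t * F x y s t))
      + (- lam2) * (y * F x y s t + t * F x y s t)) \<in> W"
    by (rule Wlin[OF K WL0[OF F]])
  have Y2: "(\<lambda>x y s t. (lam1 - lam2) * (y * F x y s t)) \<in> W"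
    by (rule Wcong[OF Y]) (simp add: algebra_simps)
  show Yc: "(\<lambda>x y s t. y * F x y s t) \<in> W"
    by (rule Wcong[OF Wsc[OF Y2, of "1 / (lam1 - lam2)"]]) (simp add: d neq)
  show "(\<lambda>x y s t. t * F x y s t) \<in> W"
    by (rule Wcong[OF Wlin[OF WL0[OF F] Yc, of 1 "-1"]]) simp
qed

end

context gm begin

lemma shiftY: "Dg w n F \<Longrightarrow> Dg w n (\<lambda>x y s t. F x (y - 1) s t)"
  by (rule Dg_cong[OF Dg_shift[of w n F 0 "-1" 0 0]]) simp_all
lemma shiftT: "Dg w n F \<Longrightarrow> Dg w n (\<lambda>x y s t. F x y s (t - 1))"
  by (rule Dg_cong[OF Dg_shift[of w n F 0 0 0 "-1"]]) simp_all

lemma core: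
  assumes one: "(\<lambda>x y s t. 1) \<in> W"
  shows "Dg 0 m F \<Longrightarrow> (m = 0 \<or> (\<forall>G. Dg 0 (m - 1) G \<longrightarrow> G \<in> W)) \<Longrightarrow> F \<in> W"
proof (induction rule: Dg.induct)
  case (Dc n c)
  show ?case by (rule Wcong[OF Wsc[OF one, of c]]) simp
next
  case (Dx n F)
  have FW: "F \<in> W" using Dx.IH Dx.prems by simp
  have e1: "(\<lambda>x y s t. x * (F x (y - 1) s t - F x y s t)) \<in> W"
  proof (cases "n = 0")
    case True
    have "F (x+0) (y + -1) (s+0) (t+0) = F x y s t" for x y s t by (rule Dg_zero[OF Dx.hyps True]) simp
    then show ?thesis by (intro Wcong[OF W0]) simp
  next
    case False
    have "Dg 0 (n - 1 + 0) (\<lambda>x y s t. x * (F (x+0) (y + -1) (s+0) (t+0) - F x y s t))"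
      by (intro Dg.Dx Dg_diff[OF Dx.hyps]) simp
    then have "(\<lambda>x y s t. x * (F (x+0) (y + -1) (s+0) (t+0) - F x y s t)) \<in> W"
      using Dx.prems False by simp
    then show ?thesis by (rule Wcong) simp
  qed
  have e2: "(\<lambda>x y s t. s * (F x y s (t - 1) - F x y s t)) \<in> W"
  proof (cases "n = 0")
    case True
    have "F (x+0) (y + 0) (s+0) (t + -1) = F x y s t" for x y s t by (rule Dg_zero[OF Dx.hyps True]) simp
    then show ?thesis by (intro Wcong[OF W0]) simp
  next
    case False
    have "Dg 0 (n - 1 + 0) (\<lambda>x y s t. s * (F (x+0) (y + 0) (s+0) (t + -1) - F x y s t))"
      by (intro Dg.Ds Dg_diff[OF Dx.hyps]) simp
    then have "(\<lambda>x y s t. s * (F (x+0) (y + 0) (s+0) (t + -1) - F x y s t)) \<in> W"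
      using Dx.prems False by simp
    then show ?thesis by (rule Wcong) simp
  qed
  show ?case using XS(1)[OF FW e1 e2] .
next
  case (Ds n F)
  have FW: "F \<in> W" using Ds.IH Ds.prems by simp
  have e1: "(\<lambda>x y s t. x * (F x (y - 1) s t - F x y s t)) \<in> W"
  proof (cases "n = 0")
    case True
    have "F (x+0) (y + -1) (s+0) (t+0) = F x y s t" for x y s t by (rule Dg_zero[OF Ds.hyps True]) simp
    then show ?thesis by (intro Wcong[OF W0]) simp
  next
    case False
    have "Dg 0 (n - 1 + 0) (\<lambda>x y s t. x * (F (x+0) (y + -1) (s+0) (t+0) - F x y s t))"
      by (intro Dg.Dx Dg_diff[OF Ds.hyps]) simp
    then have "(\<lambda>x y s t. x * (F (x+0) (y + -1) (s+0) (t+0) - F x y s t)) \<in> W"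
      using Ds.prems False by simp
    then show ?thesis by (rule Wcong) simp
  qed
  have e2: "(\<lambda>x y s t. s * (F x y s (t - 1) - F x y s t)) \<in> W"
  proof (cases "n = 0")
    case True
    have "F (x+0) (y + 0) (s+0) (t + -1) = F x y s t" for x y s t by (rule Dg_zero[OF Ds.hyps True]) simp
    then show ?thesis by (intro Wcong[OF W0]) simp
  next
    case False
    have "Dg 0 (n - 1 + 0) (\<lambda>x y s t. s * (F (x+0) (y + 0) (s+0) (t + -1) - F x y s t))"
      by (intro Dg.Ds Dg_diff[OF Ds.hyps]) simp
    then have "(\<lambda>x y s t. s * (F (x+0) (y + 0) (s+0) (t + -1) - F x y s t)) \<in> W"
      using Ds.prems False by simp
    then show ?thesis by (rule Wcong) simp
  qed
  show ?case using XS(2)[OF FW e1 e2] .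
next
  case (Dy n F)
  have low: "\<And>G. Dg 0 n G \<Longrightarrow> G \<in> W" using Dy.prems by simp
  have FW: "F \<in> W" by (rule low[OF Dy.hyps])
  have e1: "(\<lambda>x y s t. y * (F x (y - 1) s t - F x y s t)) \<in> W"
    by (rule Wcong[OF low[OF Dg_ydiff[OF Dy.hyps, of "-1"]]]) simp
  have e2: "(\<lambda>x y s t. t * (F x y s (t - 1) - F x y s t)) \<in> W"
    by (rule Wcong[OF low[OF Dg_tdiff[OF Dy.hyps, of "-1"]]]) simp
  have x1: "Dg 0 n (\<lambda>x y s t. x * F x (y - 1) s t)"
    using Dg.Dx[OF shiftY[OF Dy.hyps]] by simp
  have e3: "(\<lambda>x y s t. (eta1 - x) * F x (y - 1) s t) \<in> W"
    by (rule Wcong[OF low[OF Dg_lin[OF shiftY[OF Dy.hyps] x1, of eta1 "-1"]]]) (simp add: algebra_simps)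
  have s1': "Dg 0 n (\<lambda>x y s t. s * F x y s (t - 1))"
    using Dg.Ds[OF shiftT[OF Dy.hyps]] by simp
  have e4: "(\<lambda>x y s t. (s + eta2) * F x y s (t - 1)) \<in> W"
    by (rule Wcong[OF low[OF Dg_lin[OF shiftT[OF Dy.hyps] s1', of eta2 1]]]) (simp add: algebra_simps)
  show ?case using YT(1)[OF FW e1 e2 e3 e4] .
next
  case (Dt n F)
  have low: "\<And>G. Dg 0 n G \<Longrightarrow> G \<in> W" using Dt.prems by simp
  have FW: "F \<in> W" by (rule low[OF Dt.hyps])
  have e1: "(\<lambda>x y s t. y * (F x (y - 1) s t - F x y s t)) \<in> W"
    by (rule Wcong[OF low[OF Dg_ydiff[OF Dt.hyps, of "-1"]]]) simp
  have e2: "(\<lambda>x y s t. t * (F x y s (t - 1) - F x y s t)) \<in> W"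
    by (rule Wcong[OF low[OF Dg_tdiff[OF Dt.hyps, of "-1"]]]) simp
  have x1: "Dg 0 n (\<lambda>x y s t. x * F x (y - 1) s t)"
    using Dg.Dx[OF shiftY[OF Dt.hyps]] by simp
  have e3: "(\<lambda>x y s t. (eta1 - x) * F x (y - 1) s t) \<in> W"
    by (rule Wcong[OF low[OF Dg_lin[OF shiftY[OF Dt.hyps] x1, of eta1 "-1"]]]) (simp add: algebra_simps)
  have s1': "Dg 0 n (\<lambda>x y s t. s * F x y s (t - 1))"
    using Dg.Ds[OF shiftT[OF Dt.hyps]] by simp
  have e4: "(\<lambda>x y s t. (s + eta2) * F x y s (t - 1)) \<in> W"
    by (rule Wcong[OF low[OF Dg_lin[OF shiftT[OF Dt.hyps] s1', of eta2 1]]]) (simp add: algebra_simps)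
  show ?case using YT(2)[OF FW e1 e2 e3 e4] .
next
  case (Dadd n F G)
  show ?case by (rule Wadd[OF Dadd.IH(1)[OF Dadd.prems] Dadd.IH(2)[OF Dadd.prems]])
next
  case (Dmono n F)
  have "\<forall>G. Dg 0 n G \<longrightarrow> G \<in> W" using Dmono.prems by simp
  then have "Dg 0 n F \<longrightarrow> F \<in> W" by (rule spec)
  then show ?case using Dmono.hyps by (rule mp)
qed

lemma all_in:
  assumes one: "(\<lambda>x y s t. 1) \<in> W"
  shows "Dg 0 n F \<Longrightarrow> F \<in> W"
proof (induction n arbitrary: F)
  case 0 show ?case by (rule core[OF one 0]) simp
next
  case (Suc n) show ?case by (rule core[OF one Suc.prems]) (use Suc.IH in simp)
qed

lemma const_one:
  assumes FW: "F \<in> W" and nz: "F \<noteq> (\<lambda>x y s t. 0)" and c: "\<And>x y s t. F x y s t = F 0 0 0 0"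
  shows "(\<lambda>x y s t. 1) \<in> W"
proof -
  have "F 0 0 0 0 \<noteq> 0"
  proof
    assume z: "F 0 0 0 0 = 0"
    have "F x y s t = 0" for x y s t using c[of x y s t] z by (simp only:)
    then have "F = (\<lambda>x y s t. 0)" by (intro ext)
    then show False using nz by (simp only:)
  qed
  moreover have "1 / F 0 0 0 0 * F x y s t = 1 / F 0 0 0 0 * F 0 0 0 0" for x y s t
    using c[of x y s t] by (simp only:)
  ultimately have "1 / F 0 0 0 0 * F x y s t = 1" for x y s t by simp
  then show ?thesis by (intro Wcong[OF Wsc[OF FW, of "1 / F 0 0 0 0"]])
qed

lemma fun4_zero: fixes A B :: fun4 shows "(\<lambda>x y s t. A x y s t - B x y s t) = (\<lambda>x y s t. 0) \<Longrightarrow> A x y s t = B x y s t"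
proof -
  assume "(\<lambda>x y s t. A x y s t - B x y s t) = (\<lambda>x y s t. 0)"
  then have "\<forall>x y s t. A x y s t - B x y s t = 0" by (simp add: fun_eq_iff)
  then have "A x y s t - B x y s t = 0" by blast
  then show ?thesis by simp
qed

lemma get_one:
  shows "Dg (Suc 0) n F \<Longrightarrow> F \<in> W \<Longrightarrow> F \<noteq> (\<lambda>x y s t. 0) \<Longrightarrow> (\<lambda>x y s t. 1) \<in> W"
proof (induction n arbitrary: F rule: less_induct)
  case (less n F)
  note Fd = less.prems(1) and FW = less.prems(2) and nz = less.prems(3)
  show ?case
  proof (cases "n = 0")
    case True
    show ?thesis by (rule const_one[OF FW nz]) (rule Dg1_const[OF Fd True refl])
  next
    case npos: False
    let ?D1 = "\<lambda>x y s t. F (x - 1) (y - 1) s t - F (x - 1) y s t"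
    let ?D2 = "\<lambda>x y s t. F x y (s + 1) (t - 1) - F x y (s + 1) t"
    let ?D3 = "\<lambda>x y s t. F (x - 1) y s t - F x y s t"
    let ?D4 = "\<lambda>x y s t. F x y (s + 1) t - F x y s t"
    have W1: "?D1 \<in> W" by (rule Wcong[OF Wlin[OF WI1[OF FW] WI0[OF FW], of 1 "-1"]]) simp
    have W2: "?D2 \<in> W" by (rule Wcong[OF Wlin[OF WJ1[OF FW] WJ0[OF FW], of 1 "-1"]]) simp
    have W3: "?D3 \<in> W" by (rule Wcong[OF Wlin[OF WI0[OF FW] FW, of 1 "-1"]]) simp
    have W4: "?D4 \<in> W" by (rule Wcong[OF Wlin[OF WJ0[OF FW] FW, of 1 "-1"]]) simp
    have Gx: "Dg (Suc 0) n (\<lambda>x y s t. F (x + -1) (y+0) (s+0) (t+0))" by (rule Dg_shift[OF Fd])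
    have Gs: "Dg (Suc 0) n (\<lambda>x y s t. F (x + 0) (y+0) (s+1) (t+0))" by (rule Dg_shift[OF Fd])
    have D1: "Dg (Suc 0) (n - 1) ?D1"
      by (rule Dg_cong[OF Dg_diff[OF Gx, of 0 0 "-1" 0]]) simp_all
    have D2: "Dg (Suc 0) (n - 1) ?D2"
      by (rule Dg_cong[OF Dg_diff[OF Gs, of 0 0 0 "-1"]]) simp_all
    have D3: "Dg (Suc 0) (n - 1) ?D3"
      by (rule Dg_cong[OF Dg_diff[OF Fd, of "-1" 0 0 0]]) simp_all
    have D4: "Dg (Suc 0) (n - 1) ?D4"
      by (rule Dg_cong[OF Dg_diff[OF Fd, of 0 1 0 0]]) simp_all
    have lt: "n - 1 < n" using npos by simp
    show ?thesis
    proof (cases "?D1 = (\<lambda>x y s t. 0)")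
      case False then show ?thesis by (rule less.IH[OF lt D1 W1])
    next
      case e1: True
      show ?thesis
      proof (cases "?D2 = (\<lambda>x y s t. 0)")
        case False then show ?thesis by (rule less.IH[OF lt D2 W2])
      next
        case e2: True
        show ?thesis
        proof (cases "?D3 = (\<lambda>x y s t. 0)")
          case False then show ?thesis by (rule less.IH[OF lt D3 W3])
        next
          case e3: True
          show ?thesis
          proof (cases "?D4 = (\<lambda>x y s t. 0)")
            case False then show ?thesis by (rule less.IH[OF lt D4 W4])
          next
            case e4: True
      have z1: "F (x - 1) (y - 1) s t = F (x - 1) y s t" for x y s t
        by (rule fun4_zero[OF e1])
      have z2: "F x y (s + 1) (t - 1) = F x y (s + 1) t" for x y s t
        by (rule fun4_zero[OF e2])
      have z3: "F (x - 1) y s t = F x y s t" for x y s t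
        by (rule fun4_zero[OF e3])
      have z4: "F x y (s + 1) t = F x y s t" for x y s t
        by (rule fun4_zero[OF e4])
      have P: "P4 F" by (rule Dg_P4[OF Fd])
      have py: "F x (y + 1) s t = F x y s t" for x y s t
        using z1[of "x+1" "y+1" s t] by simp
      have pt: "F x y s (t + 1) = F x y s t" for x y s t
        using z2[of x y "s-1" "t+1"] by simp
      have px: "F (x + 1) y s t = F x y s t" for x y s t
        using z3[of "x+1" y s t] by simp
      have ps: "F x y (s + 1) t = F x y s t" for x y s t by (rule z4)
      have "F x y s t = F 0 0 0 0" for x y s t
      proof -
        have "F x y s t = F 0 y s t" by (rule per_x[OF P px])
        also have "\<dots> = F 0 0 s t" by (rule per_y[OF P py])
        also have "\<dots> = F 0 0 0 t" by (rule per_s[OF P ps])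
        also have "\<dots> = F 0 0 0 0" by (rule per_t[OF P pt])
        finally show ?thesis .
      qed
      then show ?thesis by (rule const_one[OF FW nz])
    qed
  qed
  qed
  qed
  qed
qed

end

lemma P4_cong: "P4 F \<Longrightarrow> (\<And>x y s t. F x y s t = G x y s t) \<Longrightarrow> P4 G"
proof -
  assume "P4 F" "\<And>x y s t. F x y s t = G x y s t"
  moreover have "F = G" using \<open>\<And>x y s t. F x y s t = G x y s t\<close> by (intro ext) simp
  ultimately show ?thesis by simp
qed

lemma P4_act:
  assumes Fp: "P4 F"
  shows "P4 (tensor_act (omegaI lam1 eta1 sig1) (omegaJ lam2 eta2 sig2) g F)"
proof (cases g)
  case (L m)
  have "P4 (\<lambda>x y s t. (lam1 powi m * ((y + (- of_int m) * x) + of_int m * eta1)) * F (x+0) (y + - of_int m) (s+0) (t+0)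
     + (lam2 powi m * ((t + of_int m * s) + of_int m * eta2)) * F (x+0) (y+0) (s+0) (t + - of_int m))"
    by (intro P4.Padd P4.Pmul P4.Pc P4.Px P4.Py P4.Ps P4.Pt P4_shift Fp)
  then show ?thesis by (rule P4_cong) (simp add: act_eval L)
next
  case (H m)
  have "P4 (\<lambda>x y s t. (lam1 powi m * x) * F (x+0) (y + - of_int m) (s+0) (t+0)
     + (lam2 powi m * s) * F (x+0) (y+0) (s+0) (t + - of_int m))"
    by (intro P4.Padd P4.Pmul P4.Pc P4.Px P4.Py P4.Ps P4.Pt P4_shift Fp)
  then show ?thesis by (rule P4_cong) (simp add: act_eval H)
next
  case (I m)
  have "P4 (\<lambda>x y s t. (lam1 powi m * sig1) * F (x + -1) (y + - of_int m) (s+0) (t+0))"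
    by (intro P4.Padd P4.Pmul P4.Pc P4.Px P4.Py P4.Ps P4.Pt P4_shift Fp)
  then show ?thesis by (rule P4_cong) (simp add: act_eval I)
next
  case (J m)
  have "P4 (\<lambda>x y s t. (lam2 powi m * sig2) * F (x+0) (y+0) (s+1) (t + - of_int m))"
    by (intro P4.Padd P4.Pmul P4.Pc P4.Px P4.Py P4.Ps P4.Pt P4_shift Fp)
  then show ?thesis by (rule P4_cong) (simp add: act_eval J)
qed

lemma inv_act:
  assumes inv: "\<And>x y s t. F x y s t = F x 0 s (y + t)"
  shows "tensor_act (omegaI lam eta1 sig1) (omegaJ lam eta2 sig2) g F x y s t =
         tensor_act (omegaI lam eta1 sig1) (omegaJ lam eta2 sig2) g F x 0 s (y + t)"
proof (cases g)
  case (L m)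
  let ?M = "of_int m :: complex"
  have a1: "F x (y - ?M) s t = F x 0 s (y + t - ?M)" using inv[of x "y - ?M" s t] by (simp add: algebra_simps)
  have a2: "F x y s (t - ?M) = F x 0 s (y + t - ?M)" using inv[of x y s "t - ?M"] by (simp add: algebra_simps)
  have a3: "F x (0 - ?M) s (y + t) = F x 0 s (y + t - ?M)" using inv[of x "0 - ?M" s "y + t"] by (simp add: algebra_simps)
  have a4: "F x 0 s (y + t - ?M) = F x 0 s (y + t - ?M)" by simp
  show ?thesis unfolding act_eval L gca.case using a1 a2 a3 by (simp add: algebra_simps)
next
  case (H m)
  let ?M = "of_int m :: complex"
  have a1: "F x (y - ?M) s t = F x 0 s (y + t - ?M)" using inv[of x "y - ?M" s t] by (simp add: algebra_simps)
  have a2: "F x y s (t - ?M) = F x 0 s (y + t - ?M)" using inv[of x y s "t - ?M"] by (simp add: algebra_simps)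
  have a3: "F x (0 - ?M) s (y + t) = F x 0 s (y + t - ?M)" using inv[of x "0 - ?M" s "y + t"] by (simp add: algebra_simps)
  show ?thesis unfolding act_eval H gca.case using a1 a2 a3 by (simp add: algebra_simps)
next
  case (I m)
  let ?M = "of_int m :: complex"
  have a1: "F (x - 1) (y - ?M) s t = F (x - 1) 0 s (y + t - ?M)" using inv[of "x - 1" "y - ?M" s t] by (simp add: algebra_simps)
  have a3: "F (x - 1) (0 - ?M) s (y + t) = F (x - 1) 0 s (y + t - ?M)" using inv[of "x - 1" "0 - ?M" s "y + t"] by (simp add: algebra_simps)
  show ?thesis unfolding act_eval I gca.case using a1 a3 by (simp add: algebra_simps)
next
  case (J m)
  let ?M = "of_int m :: complex"
  have a1: "F x y (s + 1) (t - ?M) = F x 0 (s + 1) (y + t - ?M)" using inv[of x y "s + 1" "t - ?M"] by (simp add: algebra_simps)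
  have a3: "F x 0 (s + 1) (y + t - ?M) = F x 0 (s + 1) (y + t - ?M)" by simp
  show ?thesis unfolding act_eval J gca.case using a1 by (simp add: algebra_simps)
qed

lemma one_ne_zero4: "(\<lambda>x y s t. 1::complex) \<noteq> (\<lambda>x y s t. 0)"
proof
  assume h: "(\<lambda>x y s t. 1::complex) = (\<lambda>x y s t. 0)"
  have "(1::complex) = 0" using fun_cong[OF fun_cong[OF fun_cong[OF fun_cong[OF h]]]] by simp
  then show False by simp
qed

lemma reducible:
  "\<not> irreducible_mod4 poly4 (tensor_act (omegaI lam eta1 sig1) (omegaJ lam eta2 sig2))"
proof
  let ?act = "tensor_act (omegaI lam eta1 sig1) (omegaJ lam eta2 sig2)"
  assume irr: "irreducible_mod4 poly4 ?act"
  define W0 where "W0 = {F. F \<in> poly4 \<and> (\<forall>x y s t. F x y s t = F x 0 s (y + t))}"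
  have sub: "W0 \<subseteq> poly4" unfolding W0_def by blast
  have cs: "csubspace4 W0"
    unfolding csubspace4_def W0_def
    by (auto intro: poly4_const poly4_add poly4_mult[OF poly4_const])
  have cl: "\<forall>g. \<forall>F\<in>W0. ?act g F \<in> W0"
  proof (intro allI ballI)
    fix g F assume F: "F \<in> W0"
    then have Fp: "P4 F" and inv: "\<And>x y s t. F x y s t = F x 0 s (y + t)"
      unfolding W0_def by (auto simp: poly4_iff)
    have "?act g F \<in> poly4" using P4_act[OF Fp] by (simp add: poly4_iff)
    moreover have "\<forall>x y s t. ?act g F x y s t = ?act g F x 0 s (y + t)"
      using inv_act[where F=F, OF inv] by blast
    ultimately show "?act g F \<in> W0" unfolding W0_def by blast
  qed
  have "W0 = {\<lambda>x y s t. 0} \<or> W0 = poly4"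
    using irr sub cs cl unfolding irreducible_mod4_def by blast
  moreover have "(\<lambda>x y s t. 1) \<in> W0" unfolding W0_def using poly4_const by simp
  moreover have "(\<lambda>x y s t. y) \<notin> W0"
  proof
    assume "(\<lambda>x y s t. y) \<in> W0"
    then have "\<forall>x y s t. (y::complex) = 0" unfolding W0_def by simp
    then show False by (metis one_neq_zero)
  qed
  ultimately show False using one_ne_zero4 poly4_y by blast
qed

lemma irreducible:
  assumes "lam1 \<noteq> 0" and "lam2 \<noteq> 0" and "sig1 \<noteq> 0" and "sig2 \<noteq> 0" and "lam1 \<noteq> lam2"
  shows "irreducible_mod4 poly4 (tensor_act (omegaI lam1 eta1 sig1) (omegaJ lam2 eta2 sig2))"
  unfolding irreducible_mod4_def
proof (intro conjI allI impI)
  show "poly4 \<noteq> {\<lambda>x y s t. 0}"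
  proof
    assume "poly4 = {\<lambda>x y s t. 0}"
    then show False using poly4_const[of 1] one_ne_zero4 by blast
  qed
next
  fix W assume "W \<subseteq> poly4 \<and> csubspace4 W \<and>
      (\<forall>g. \<forall>F\<in>W. tensor_act (omegaI lam1 eta1 sig1) (omegaJ lam2 eta2 sig2) g F \<in> W)"
  then have sub: "W \<subseteq> poly4" and cs: "csubspace4 W"
    and cl: "\<And>g F. F \<in> W \<Longrightarrow> tensor_act (omegaI lam1 eta1 sig1) (omegaJ lam2 eta2 sig2) g F \<in> W"
    by auto
  interpret gm W lam1 lam2 eta1 eta2 sig1 sig2
    using cs assms cl unfolding csubspace4_def by unfold_locales auto
  show "W = {\<lambda>x y s t. 0} \<or> W = poly4"
  proof (cases "\<exists>F\<in>W. F \<noteq> (\<lambda>x y s t. 0)")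
    case False
    then have "W = {\<lambda>x y s t. 0}" using W0 by blast
    then show ?thesis by simp
  next
    case True
    then obtain F where FW: "F \<in> W" and nz: "F \<noteq> (\<lambda>x y s t. 0)" by blast
    have "P4 F" using FW sub poly4_iff by blast
    then obtain n where "Dg (Suc 0) n F" using P4_Dg by blast
    then have one: "(\<lambda>x y s t. 1) \<in> W" using get_one FW nz by blast
    have "poly4 \<subseteq> W"
    proof
      fix G assume "G \<in> poly4"
      then have "P4 G" using poly4_iff by blast
      then obtain m where "Dg 0 m G" using P4_Dg by blast
      then show "G \<in> W" by (rule all_in[OF one])
    qed
    then show ?thesis using sub by blast
  qed
qed

theorem theorem3p4:
  fixes lam1 lam2 sig1 sig2 eta1 eta2 :: complex
  assumes "lam1 \<noteq> 0" and "lam2 \<noteq> 0" and "sig1 \<noteq> 0" and "sig2 \<noteq> 0"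
  shows "irreducible_mod4 poly4 (tensor_act (omegaI lam1 eta1 sig1) (omegaJ lam2 eta2 sig2))
           \<longleftrightarrow> lam1 \<noteq> lam2"
proof
  assume irr: "irreducible_mod4 poly4 (tensor_act (omegaI lam1 eta1 sig1) (omegaJ lam2 eta2 sig2))"
  show "lam1 \<noteq> lam2"
  proof
    assume "lam1 = lam2"
    then show False using irr reducible[of lam1 eta1 sig1 eta2 sig2] by simp
  qed
next
  assume "lam1 \<noteq> lam2"
  then show "irreducible_mod4 poly4 (tensor_act (omegaI lam1 eta1 sig1) (omegaJ lam2 eta2 sig2))"
    using irreducible assms by blast
qed

end
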